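(* Let $0<\alpha,\beta<1$ satisfy $\beta>2-\frac1\alpha$ and $\alpha>2-\frac1\beta$, and let $S\subset\mathbb{R}$ be a Bernstein set. Then Schmidt's game with parameters $\alpha,\beta$ and target set $S$ is not determined, i.e., neither Alice nor Bob has a winning strategy.
   Context: A Bernstein set is a set $S\subset\mathbb{R}$ that has nonempty intersection with every closed uncountable subset of $\mathbb{R}$ but contains no closed uncountable subset of $\mathbb{R}$. Schmidt's game with parameters $0<\alpha,\beta<1$ and target set $S\subset\mathbb{R}$: Bob first chooses a compact interval $B_0$ of positive length. Alice then chooses a compact interval $A_0\subset B_0$ with $|A_0|=\alpha|B_0|$. Bob then chooses a compact interval $B_1\subset A_0$ with $|B_1|=\beta|A_0|$, and so on: $A_n\subset B_n$ with $|A_n|=\alpha|B_n|$ and $B_{n+1}\subset A_n$ with $|B_{n+1}|=\beta|A_n|$. Here $|I|$ is the length of the interval $I$. Alice wins if $\bigcap_{n\ge0}B_n$ has nonempty intersection with $S$; otherwise Bob wins. A strategy is a rule specifying a legal move for a player in every situation as a function of previously chosen intervals; it is winning if it guarantees that player wins regardless of the opponent's moves. The game is determined on $S$ if one of the players has a winning strategy, and not determined otherwise. *)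

theory Defs
  imports "HOL-Analysis.Analysis"
begin

type_synonym ivl = "real \<times> real"

definition ivl_set :: "ivl \<Rightarrow> real set" where
  "ivl_set I = {fst I .. snd I}"

definition ivl_len :: "ivl \<Rightarrow> real" where
  "ivl_len I = snd I - fst I"

definition legal_sub :: "real \<Rightarrow> ivl \<Rightarrow> ivl \<Rightarrow> bool" where
  "legal_sub c I J \<longleftrightarrow> fst I \<le> fst J \<and> snd J \<le> snd I \<and> ivl_len J = c * ivl_len I"

text \<open>Histories: the list [B_0, A_0, ..., B_n] (Alice to move) and [B_0, A_0, ..., B_n, A_n] (Bob to move).\<close>
definition hist_B :: "(nat \<Rightarrow> ivl) \<Rightarrow> (nat \<Rightarrow> ivl) \<Rightarrow> nat \<Rightarrow> ivl list" where
  "hist_B B A n = concat (map (\<lambda>i. [B i, A i]) [0..<n]) @ [B n]"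

definition hist_A :: "(nat \<Rightarrow> ivl) \<Rightarrow> (nat \<Rightarrow> ivl) \<Rightarrow> nat \<Rightarrow> ivl list" where
  "hist_A B A n = concat (map (\<lambda>i. [B i, A i]) [0..<n]) @ [B n, A n]"

definition legal_upto :: "real \<Rightarrow> real \<Rightarrow> (nat \<Rightarrow> ivl) \<Rightarrow> (nat \<Rightarrow> ivl) \<Rightarrow> nat \<Rightarrow> bool" where
  "legal_upto \<alpha> \<beta> B A n \<longleftrightarrow> ivl_len (B 0) > 0 \<and>
     (\<forall>k<n. legal_sub \<alpha> (B k) (A k) \<and> legal_sub \<beta> (A k) (B (Suc k)))"

definition legal_play :: "real \<Rightarrow> real \<Rightarrow> (nat \<Rightarrow> ivl) \<Rightarrow> (nat \<Rightarrow> ivl) \<Rightarrow> bool" where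
  "legal_play \<alpha> \<beta> B A \<longleftrightarrow> ivl_len (B 0) > 0 \<and>
     (\<forall>k. legal_sub \<alpha> (B k) (A k) \<and> legal_sub \<beta> (A k) (B (Suc k)))"

definition alice_wins_play :: "real set \<Rightarrow> (nat \<Rightarrow> ivl) \<Rightarrow> bool" where
  "alice_wins_play S B \<longleftrightarrow> (\<Inter>n. ivl_set (B n)) \<inter> S \<noteq> {}"

definition alice_strategy :: "real \<Rightarrow> real \<Rightarrow> (ivl list \<Rightarrow> ivl) \<Rightarrow> bool" where
  "alice_strategy \<alpha> \<beta> \<sigma> \<longleftrightarrow>
     (\<forall>B A n. legal_upto \<alpha> \<beta> B A n \<longrightarrow> legal_sub \<alpha> (B n) (\<sigma> (hist_B B A n)))"

text \<open>A strategy for Bob: the value at the empty history is B_0, and it gives a legal move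
  in every legal position where he is to move.\<close>
definition bob_strategy :: "real \<Rightarrow> real \<Rightarrow> (ivl list \<Rightarrow> ivl) \<Rightarrow> bool" where
  "bob_strategy \<alpha> \<beta> \<tau> \<longleftrightarrow> ivl_len (\<tau> []) > 0 \<and>
     (\<forall>B A n. legal_upto \<alpha> \<beta> B A n \<and> legal_sub \<alpha> (B n) (A n)
        \<longrightarrow> legal_sub \<beta> (A n) (\<tau> (hist_A B A n)))"

definition alice_winning :: "real \<Rightarrow> real \<Rightarrow> real set \<Rightarrow> (ivl list \<Rightarrow> ivl) \<Rightarrow> bool" where
  "alice_winning \<alpha> \<beta> S \<sigma> \<longleftrightarrow> alice_strategy \<alpha> \<beta> \<sigma> \<and>
     (\<forall>B A. legal_play \<alpha> \<beta> B A \<and> (\<forall>n. A n = \<sigma> (hist_B B A n)) \<longrightarrow> alice_wins_play S B)"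

definition bob_winning :: "real \<Rightarrow> real \<Rightarrow> real set \<Rightarrow> (ivl list \<Rightarrow> ivl) \<Rightarrow> bool" where
  "bob_winning \<alpha> \<beta> S \<tau> \<longleftrightarrow> bob_strategy \<alpha> \<beta> \<tau> \<and>
     (\<forall>B A. legal_play \<alpha> \<beta> B A \<and> B 0 = \<tau> [] \<and> (\<forall>n. B (Suc n) = \<tau> (hist_A B A n))
        \<longrightarrow> \<not> alice_wins_play S B)"

definition schmidt_determined :: "real \<Rightarrow> real \<Rightarrow> real set \<Rightarrow> bool" where
  "schmidt_determined \<alpha> \<beta> S \<longleftrightarrow> (\<exists>\<sigma>. alice_winning \<alpha> \<beta> S \<sigma>) \<or> (\<exists>\<tau>. bob_winning \<alpha> \<beta> S \<tau>)"

definition bernstein_set :: "real set \<Rightarrow> bool" where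
  "bernstein_set S \<longleftrightarrow> (\<forall>C. closed C \<and> uncountable C \<longrightarrow> C \<inter> S \<noteq> {} \<and> \<not> C \<subseteq> S)"

end

theory Submission
  imports Defs
begin

definition mv :: "real \<Rightarrow> bool \<Rightarrow> ivl \<Rightarrow> ivl" where
  "mv q r K = (if r then (snd K - q * ivl_len K, snd K) else (fst K, fst K + q * ivl_len K))"

definition kap :: "real \<Rightarrow> real \<Rightarrow> real" where
  "kap p q = (1 - p) / (1 - p * q)"

lemma mv_len[simp]: "ivl_len (mv q r K) = q * ivl_len K"
  by (simp add: mv_def ivl_len_def)

lemma mv_legal: "0 \<le> q \<Longrightarrow> q \<le> 1 \<Longrightarrow> 0 \<le> ivl_len K \<Longrightarrow> legal_sub q K (mv q r K)"
proof -
  assume a: "0 \<le> q" "q \<le> 1" "0 \<le> ivl_len K"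
  have "q * ivl_len K \<le> ivl_len K" using a by (simp add: mult_left_le_one_le)
  then show ?thesis using a unfolding legal_sub_def mv_def ivl_len_def by auto
qed

lemma legal_sub_len: "legal_sub c I J \<Longrightarrow> ivl_len J = c * ivl_len I"
  by (simp add: legal_sub_def)

locale scheme =
  fixes p q :: real and M :: nat and I J :: "(nat \<Rightarrow> bool) \<Rightarrow> nat \<Rightarrow> ivl" and I0 :: ivl
  assumes p: "0 < p" "p < 1" and q: "0 < q" "q < 1"
  and M: "M \<ge> 1" and bound: "2 * q * (kap p q + (1 - kap p q) * (p * q) ^ (M - 1)) < 1"
  and I0: "\<And>b. I b 0 = I0" and I0len: "ivl_len I0 > 0"
  and leg: "\<And>b n. legal_sub p (I b n) (J b n)"
  and nxt: "\<And>b n. I b (Suc n) = mv q (b (n div M)) (J b n)"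
  and det: "\<And>b b' n. (\<forall>k\<le>n. I b k = I b' k) \<Longrightarrow> (\<forall>k<n. J b k = J b' k) \<Longrightarrow> J b n = J b' n"
begin

lemma len_I: "ivl_len (I b n) = (p * q) ^ n * ivl_len I0"
  by (induction n) (auto simp: I0 nxt legal_sub_len[OF leg] algebra_simps)

lemma len_I_pos: "ivl_len (I b n) > 0"
  using p q I0len by (simp add: len_I)

lemma len_J: "ivl_len (J b n) = p * ivl_len (I b n)"
  using leg legal_sub_len by blast

lemma step_I: "fst (I b n) \<le> fst (I b (Suc n)) \<and> snd (I b (Suc n)) \<le> snd (I b n)"
proof -
  have L: "legal_sub p (I b n) (J b n)" by (rule leg)
  have "ivl_len (J b n) \<ge> 0" unfolding len_J using len_I_pos[of b n] p by simp
  then have "legal_sub q (J b n) (I b (Suc n))" using q by (simp add: nxt mv_legal)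
  with L show ?thesis by (auto simp: legal_sub_def)
qed

lemma nest: "n \<le> n' \<Longrightarrow> ivl_set (I b n') \<subseteq> ivl_set (I b n)"
proof -
  assume "n \<le> n'"
  have "incseq (\<lambda>n. fst (I b n))" by (rule incseq_SucI) (use step_I in blast)
  moreover have "decseq (\<lambda>n. snd (I b n))" by (rule decseq_SucI) (use step_I in blast)
  ultimately show ?thesis using \<open>n \<le> n'\<close> unfolding ivl_set_def incseq_def decseq_def
    by auto
qed

lemma agree: assumes "\<forall>k<K. b k = b' k"
  shows "n \<le> K * M \<Longrightarrow> I b n = I b' n \<and> J b n = J b' n"
proof (induction n rule: less_induct)
  case (less n)
  have hI: "I b n = I b' n"
  proof (cases n)
    case 0 then show ?thesis by (simp add: I0)
  next
    case (Suc m)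
    then have "m < K * M" using less by simp
    then have "m div M < K" using M by (simp add: div_less_iff_less_mult)
    then have "b (m div M) = b' (m div M)" using assms by simp
    moreover have "J b m = J b' m" using less Suc by simp
    ultimately show ?thesis using Suc by (simp add: nxt)
  qed
  have "J b n = J b' n"
    by (rule det) (use less hI in \<open>auto simp: le_less\<close>)
  with hI show ?case by simp
qed

lemma kap_eq: "kap p q = (1 - p) + kap p q * p * q"
proof -
  have "1 - p * q \<noteq> 0" using p q by (smt (verit) mult_less_cancel_right2)
  then show ?thesis unfolding kap_def by (simp add: field_simps)
qed

lemma phi_left: assumes "\<not> b (n div M)"
  shows "fst (I b (Suc n)) + kap p q * ivl_len (I b (Suc n)) \<le> fst (I b n) + kap p q * ivl_len (I b n)"
proof -
  define l where "l = ivl_len (I b n)"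
  have a: "fst (J b n) + p * l \<le> snd (I b n)" "fst (I b n) + l = snd (I b n)"
    using leg[of b n] unfolding legal_sub_def l_def ivl_len_def by auto
  have b: "fst (I b (Suc n)) = fst (J b n)" "ivl_len (I b (Suc n)) = q * (p * l)"
    using assms by (simp add: nxt mv_def, simp add: nxt len_J l_def)
  have c: "kap p q * l = l - p * l + kap p q * (q * (p * l))"
    using arg_cong[OF kap_eq, of "\<lambda>x. x * l"] by (simp add: algebra_simps)
  show ?thesis unfolding b l_def[symmetric] using a c by linarith
qed

lemma phi_right: assumes "b (n div M)"
  shows "snd (I b n) - kap p q * ivl_len (I b n) \<le> snd (I b (Suc n)) - kap p q * ivl_len (I b (Suc n))"
proof -
  define l where "l = ivl_len (I b n)"
  have a: "fst (I b n) \<le> snd (J b n) - p * l" "fst (I b n) + l = snd (I b n)"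
    using leg[of b n] unfolding legal_sub_def l_def ivl_len_def by auto
  have b: "snd (I b (Suc n)) = snd (J b n)" "ivl_len (I b (Suc n)) = q * (p * l)"
    using assms by (simp add: nxt mv_def, simp add: nxt len_J l_def)
  have c: "kap p q * l = l - p * l + kap p q * (q * (p * l))"
    using arg_cong[OF kap_eq, of "\<lambda>x. x * l"] by (simp add: algebra_simps)
  show ?thesis unfolding b l_def[symmetric] using a c by linarith
qed

lemma drift_left: assumes "\<forall>j<m. \<not> b ((s + j) div M)"
  shows "j \<le> m \<Longrightarrow> fst (I b (s + j)) + kap p q * ivl_len (I b (s + j)) \<le> fst (I b s) + kap p q * ivl_len (I b s)"
proof (induction j)
  case 0 then show ?case by simp
next
  case (Suc j)
  then have "\<not> b ((s + j) div M)" using assms by simp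
  from phi_left[of b "s+j", OF this] Suc show ?case by simp
qed

lemma drift_right: assumes "\<forall>j<m. b ((s + j) div M)"
  shows "j \<le> m \<Longrightarrow> snd (I b s) - kap p q * ivl_len (I b s) \<le> snd (I b (s + j)) - kap p q * ivl_len (I b (s + j))"
proof (induction j)
  case 0 then show ?case by simp
next
  case (Suc j)
  then have "b ((s + j) div M)" using assms by simp
  from phi_right[of b "s+j", OF this] Suc show ?case by simp
qed

lemma sep_core: assumes ag: "\<forall>i<k. b i = b' i" and bk: "\<not> b k" "b' k"
  and x: "x \<in> ivl_set (I b (Suc k * M))" and y: "y \<in> ivl_set (I b' (Suc k * M))"
  shows "x < y"
proof -
  define n0 where "n0 = k * M"
  define K0 where "K0 = J b n0"
  define L where "L = ivl_len K0"
  define t where "t = (p * q) ^ (M - 1)"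
  define \<kappa> where "\<kappa> = kap p q"
  have JJ: "J b' n0 = K0" using agree[OF ag, of n0] by (simp add: n0_def K0_def)
  have d: "n0 div M = k" using M by (simp add: n0_def)
  have dd: "(Suc n0 + j) div M = k" if "j < M - 1" for j
    by (rule div_nat_eqI) (use that M in \<open>auto simp: n0_def\<close>)
  have e: "Suc n0 + (M - 1) = Suc k * M" using M by (simp add: n0_def)
  have Lpos: "L > 0" unfolding L_def K0_def len_J using len_I_pos p by simp
  have lenend: "ivl_len (I b (Suc k * M)) = t * (q * L)" "ivl_len (I b' (Suc k * M)) = t * (q * L)"
  proof -
    have "(p * q) ^ (Suc k * M) = t * (q * (p * (p * q) ^ n0))"
    proof -
      have "Suc k * M = n0 + Suc (M - 1)" using M by (simp add: n0_def)
      then show ?thesis unfolding t_def by (simp add: power_add algebra_simps)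
    qed
    then show "ivl_len (I b (Suc k * M)) = t * (q * L)" "ivl_len (I b' (Suc k * M)) = t * (q * L)"
      unfolding len_I L_def K0_def len_J len_I by (simp_all add: algebra_simps)
  qed
  have s1: "I b (Suc n0) = (fst K0, fst K0 + q * L)"
    using bk d by (simp add: nxt mv_def K0_def L_def)
  have s2: "I b' (Suc n0) = (snd K0 - q * L, snd K0)"
    using bk d JJ by (simp add: nxt mv_def L_def)
  have dl: "fst (I b (Suc k * M)) + \<kappa> * ivl_len (I b (Suc k * M)) \<le> fst K0 + \<kappa> * (q * L)"
    using drift_left[of "M - 1" b "Suc n0" "M - 1"] dd bk s1 e
    by (simp add: \<kappa>_def ivl_len_def)
  have dr: "snd K0 - \<kappa> * (q * L) \<le> snd (I b' (Suc k * M)) - \<kappa> * ivl_len (I b' (Suc k * M))"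
    using drift_right[of "M - 1" b' "Suc n0" "M - 1"] dd bk s2 e
    by (simp add: \<kappa>_def ivl_len_def)
  have x1: "x \<le> fst K0 + (\<kappa> * (q * L) + (1 - \<kappa>) * (t * (q * L)))"
    using x dl lenend(1) unfolding ivl_set_def ivl_len_def by (auto simp: algebra_simps)
  have y1: "snd K0 - (\<kappa> * (q * L) + (1 - \<kappa>) * (t * (q * L))) \<le> y"
    using y dr lenend(2) unfolding ivl_set_def ivl_len_def by (auto simp: algebra_simps)
  have eq: "\<kappa> * (q * L) + (1 - \<kappa>) * (t * (q * L)) = L * (q * (\<kappa> + (1 - \<kappa>) * t))"
    by (simp add: algebra_simps)
  have "L * (2 * (q * (\<kappa> + (1 - \<kappa>) * t))) < L * 1"
    using bound Lpos unfolding \<kappa>_def t_def by (intro mult_strict_left_mono) (auto simp: algebra_simps)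
  then have "2 * (L * (q * (\<kappa> + (1 - \<kappa>) * t))) < L" by (simp add: algebra_simps)
  moreover have "snd K0 = fst K0 + L" by (simp add: L_def ivl_len_def)
  ultimately show ?thesis using x1 y1 unfolding eq by linarith
qed

lemma sep: assumes "\<forall>i<k. b i = b' i" "b k \<noteq> b' k"
  and "x \<in> ivl_set (I b (Suc k * M))" "y \<in> ivl_set (I b' (Suc k * M))"
  shows "x \<noteq> y"
proof (cases "b k")
  case True
  then have "y < x" using sep_core[of k b' b y x] assms by auto
  then show ?thesis by simp
next
  case False
  then have "x < y" using sep_core[of k b b' x y] assms by auto
  then show ?thesis by simp
qed

lemma first_diff: assumes "b \<noteq> (b' :: nat \<Rightarrow> bool)"
  obtains k where "\<forall>i<k. b i = b' i" "b k \<noteq> b' k"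
proof -
  from assms obtain j where j: "b j \<noteq> b' j" by auto
  define k where "k = (LEAST k. b k \<noteq> b' k)"
  have "b k \<noteq> b' k" unfolding k_def by (rule LeastI[of _ j]) (rule j)
  moreover have "\<forall>i<k. b i = b' i" unfolding k_def using not_less_Least by blast
  ultimately show ?thesis using that by blast
qed

definition pt :: "(nat \<Rightarrow> bool) \<Rightarrow> real" where
  "pt b = Sup (range (\<lambda>n. fst (I b n)))"

lemma pt_in: "pt b \<in> ivl_set (I b n)"
proof -
  have fs: "fst (I b m) \<le> snd (I b n')" for m n'
  proof -
    have "fst (I b (max m n')) \<in> ivl_set (I b (max m n'))"
      using len_I_pos[of b "max m n'"] by (simp add: ivl_set_def ivl_len_def)
    then have "fst (I b (max m n')) \<in> ivl_set (I b m)" "fst (I b (max m n')) \<in> ivl_set (I b n')"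
      using nest[of m "max m n'" b] nest[of n' "max m n'" b] by auto
    then show ?thesis by (auto simp: ivl_set_def)
  qed
  have "fst (I b n) \<le> pt b" unfolding pt_def
    by (rule cSup_upper) (use fs in \<open>auto intro!: bdd_aboveI2\<close>)
  moreover have "pt b \<le> snd (I b n)" unfolding pt_def
    by (rule cSup_least) (use fs in auto)
  ultimately show ?thesis by (simp add: ivl_set_def)
qed

lemma pt_inj: "inj pt"
proof (rule injI)
  fix b b' assume eq: "pt b = pt b'"
  show "b = b'"
  proof (rule ccontr)
    assume "b \<noteq> b'"
    then obtain k where "\<forall>i<k. b i = b' i" "b k \<noteq> b' k" by (rule first_diff)
    from sep[OF this pt_in pt_in] eq show False by simp
  qed
qed

lemma level_finite: "(\<Union>b. ivl_set (I b (K * M))) = (\<Union>c \<in> (\<Pi>\<^sub>E i\<in>{..<K}. (UNIV :: bool set)). ivl_set (I c (K * M)))"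
proof (intro equalityI subsetI)
  fix x assume "x \<in> (\<Union>b. ivl_set (I b (K * M)))"
  then obtain b where b: "x \<in> ivl_set (I b (K * M))" by auto
  let ?c = "restrict b {..<K}"
  have eq: "I ?c (K * M) = I b (K * M)" using agree[of K ?c b "K * M"] by simp
  show "x \<in> (\<Union>c \<in> (\<Pi>\<^sub>E i\<in>{..<K}. (UNIV :: bool set)). ivl_set (I c (K * M)))"
  proof (rule UN_I)
    show "?c \<in> (\<Pi>\<^sub>E i\<in>{..<K}. (UNIV :: bool set))" by simp
    show "x \<in> ivl_set (I ?c (K * M))" using b eq by simp
  qed
qed auto

definition CC :: "real set" where
  "CC = (\<Inter>K. \<Union>b. ivl_set (I b (K * M)))"

lemma CC_closed: "closed CC"
  unfolding CC_def
proof (rule closed_INT, intro ballI)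
  fix K :: nat
  have "finite (\<Pi>\<^sub>E i\<in>{..<K}. (UNIV :: bool set))" by (intro finite_PiE) auto
  then show "closed (\<Union>b. ivl_set (I b (K * M)))"
    unfolding level_finite
    by (intro closed_UN) (auto simp: ivl_set_def)
qed

lemma UNIV_fun_uncountable: "uncountable (UNIV :: (nat \<Rightarrow> bool) set)"
proof
  assume c: "countable (UNIV :: (nat \<Rightarrow> bool) set)"
  define f where "f = from_nat_into (UNIV :: (nat \<Rightarrow> bool) set)"
  have r: "range f = UNIV" unfolding f_def using range_from_nat_into[OF _ c] by simp
  define d where "d = (\<lambda>n. \<not> f n n)"
  obtain n where "d = f n" using r by (metis UNIV_I imageE)
  then have "d n = f n n" by simp
  then show False unfolding d_def by simp
qed

lemma CC_uncountable: "uncountable CC"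
proof
  assume c: "countable CC"
  have "range pt \<subseteq> CC" unfolding CC_def using pt_in by auto
  then have "countable (range pt)" using c countable_subset by blast
  then have "countable (UNIV :: (nat \<Rightarrow> bool) set)"
    using countable_image_inj_on pt_inj by blast
  then show False using UNIV_fun_uncountable by simp
qed

lemma CC_branch: assumes "x \<in> CC" shows "\<exists>b. \<forall>n. x \<in> ivl_set (I b n)"
proof -
  have "\<forall>K. \<exists>b. x \<in> ivl_set (I b (K * M))" using assms unfolding CC_def by blast
  then obtain bb where bb: "\<And>K. x \<in> ivl_set (I (bb K) (K * M))" by metis
  have cl: "\<forall>i<K. bb K i = bb K' i" if "K \<le> K'" for K K'
  proof (rule ccontr)
    assume "\<not> (\<forall>i<K. bb K i = bb K' i)"
    then obtain i where i: "i < K" "bb K i \<noteq> bb K' i" by auto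
    then have ne: "bb K \<noteq> bb K'" by auto
    define k where "k = (LEAST k. bb K k \<noteq> bb K' k)"
    have k1: "bb K k \<noteq> bb K' k" unfolding k_def by (rule LeastI[of _ i]) (rule i(2))
    have k2: "\<forall>j<k. bb K j = bb K' j" unfolding k_def using not_less_Least by blast
    have "k \<le> i" unfolding k_def using i(2) by (rule Least_le)
    then have "Suc k \<le> K" "Suc k \<le> K'" using i that by auto
    then have "Suc k * M \<le> K * M" "Suc k * M \<le> K' * M" by (simp_all only: mult_le_mono1)
    then have "x \<in> ivl_set (I (bb K) (Suc k * M))" "x \<in> ivl_set (I (bb K') (Suc k * M))"
      using nest bb by blast+
    from sep[OF k2 k1 this] show False by simp
  qed
  define b where "b = (\<lambda>i. bb (Suc i) i)"
  have ag: "\<forall>i<K. b i = bb K i" for K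
    unfolding b_def using cl by auto
  show ?thesis
  proof (intro exI allI)
    fix n
    have "I (bb (Suc n)) (Suc n * M) = I b (Suc n * M)"
      using agree[of "Suc n" "bb (Suc n)" b "Suc n * M"] ag by auto
    moreover have "n \<le> Suc n * M"
    proof -
      have "n * 1 \<le> n * M" using M by (rule mult_le_mono2)
      moreover have "Suc n * M = M + n * M" by simp
      ultimately show ?thesis by linarith
    qed
    ultimately show "x \<in> ivl_set (I b n)" using bb[of "Suc n"] nest[of n "Suc n * M" b] by auto
  qed
qed

lemma scheme_main: "\<exists>C. closed C \<and> uncountable C \<and> (\<forall>x\<in>C. \<exists>b. \<forall>n. x \<in> ivl_set (I b n))"
  using CC_closed CC_uncountable CC_branch by blast

end

lemma hist_B_0: "hist_B B A 0 = [B 0]" by (simp add: hist_B_def)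
lemma hist_B_Suc: "hist_B B A (Suc n) = hist_B B A n @ [A n, B (Suc n)]" by (simp add: hist_B_def)
lemma hist_A_eq: "hist_A B A n = hist_B B A n @ [A n]" by (simp add: hist_B_def hist_A_def)

lemma hist_B_cong: "(\<forall>k\<le>n. B k = B' k) \<Longrightarrow> (\<forall>k<n. A k = A' k) \<Longrightarrow> hist_B B A n = hist_B B' A' n"
  by (induction n) (auto simp: hist_B_0 hist_B_Suc)

lemma legal_upto_Suc: "legal_upto \<alpha> \<beta> B A (Suc n) \<longleftrightarrow>
   legal_upto \<alpha> \<beta> B A n \<and> legal_sub \<alpha> (B n) (A n) \<and> legal_sub \<beta> (A n) (B (Suc n))"
  by (auto simp: legal_upto_def less_Suc_eq)

lemma legal_upto_len: "legal_upto \<alpha> \<beta> B A n \<Longrightarrow> 0 < \<alpha> \<Longrightarrow> 0 < \<beta> \<Longrightarrow> ivl_len (B n) > 0"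
proof (induction n)
  case 0 then show ?case by (simp add: legal_upto_def)
next
  case (Suc n)
  then show ?case by (auto simp: legal_upto_Suc legal_sub_def)
qed

lemma legal_play_from_upto: "(\<And>n. legal_upto \<alpha> \<beta> B A n) \<Longrightarrow> legal_play \<alpha> \<beta> B A"
  unfolding legal_play_def by (metis legal_upto_Suc legal_upto_def)

fun hA :: "(ivl list \<Rightarrow> ivl) \<Rightarrow> (nat \<Rightarrow> ivl \<Rightarrow> ivl) \<Rightarrow> ivl \<Rightarrow> nat \<Rightarrow> ivl list" where
  "hA \<sigma> g B0 0 = [B0]"
| "hA \<sigma> g B0 (Suc n) = hA \<sigma> g B0 n @ [\<sigma> (hA \<sigma> g B0 n), g n (\<sigma> (hA \<sigma> g B0 n))]"

lemma play_alice:
  assumes st: "alice_strategy \<alpha> \<beta> \<sigma>" and ab: "0 < \<alpha>" "0 < \<beta>" "\<beta> \<le> 1"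
    and g: "\<And>n K. ivl_len K \<ge> 0 \<Longrightarrow> legal_sub \<beta> K (g n K)" and B0: "ivl_len B0 > 0"
  defines "B \<equiv> (\<lambda>n. last (hA \<sigma> g B0 n))" and "A \<equiv> (\<lambda>n. \<sigma> (hA \<sigma> g B0 n))"
  shows "legal_play \<alpha> \<beta> B A \<and> B 0 = B0 \<and> (\<forall>n. A n = \<sigma> (hist_B B A n)) \<and> (\<forall>n. B (Suc n) = g n (A n))"
proof -
  have h: "hist_B B A n = hA \<sigma> g B0 n" for n
    by (induction n) (simp_all add: hist_B_0 hist_B_Suc B_def A_def)
  have Bs: "B (Suc n) = g n (A n)" for n by (simp add: B_def A_def)
  have A: "A n = \<sigma> (hist_B B A n)" for n unfolding h by (simp add: A_def)
  have "legal_upto \<alpha> \<beta> B A n" for n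
  proof (induction n)
    case 0 then show ?case using B0 by (simp add: legal_upto_def B_def)
  next
    case (Suc n)
    have l1: "legal_sub \<alpha> (B n) (A n)" using st Suc A unfolding alice_strategy_def by metis
    have "ivl_len (A n) \<ge> 0" using l1 legal_upto_len[OF Suc ab(1,2)] ab
      by (simp add: legal_sub_def)
    then have "legal_sub \<beta> (A n) (B (Suc n))" by (simp add: Bs g)
    with Suc l1 show ?case by (simp add: legal_upto_Suc)
  qed
  then show ?thesis using A Bs legal_play_from_upto by (auto simp: B_def)
qed

fun hB :: "(ivl list \<Rightarrow> ivl) \<Rightarrow> (nat \<Rightarrow> ivl \<Rightarrow> ivl) \<Rightarrow> nat \<Rightarrow> ivl list" where
  "hB \<tau> f 0 = [\<tau> []]"
| "hB \<tau> f (Suc n) = hB \<tau> f n @ [f n (last (hB \<tau> f n)), \<tau> (hB \<tau> f n @ [f n (last (hB \<tau> f n))])]"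

lemma play_bob:
  assumes st: "bob_strategy \<alpha> \<beta> \<tau>" and ab: "0 < \<alpha>" "0 < \<beta>" "\<alpha> \<le> 1"
    and f: "\<And>n K. ivl_len K \<ge> 0 \<Longrightarrow> legal_sub \<alpha> K (f n K)"
  defines "B \<equiv> (\<lambda>n. last (hB \<tau> f n))" and "A \<equiv> (\<lambda>n. f n (last (hB \<tau> f n)))"
  shows "legal_play \<alpha> \<beta> B A \<and> B 0 = \<tau> [] \<and> (\<forall>n. B (Suc n) = \<tau> (hist_A B A n)) \<and> (\<forall>n. A n = f n (B n))"
proof -
  have h: "hist_B B A n = hB \<tau> f n" for n
    by (induction n) (simp_all add: hist_B_0 hist_B_Suc B_def A_def)
  have Bs: "B (Suc n) = \<tau> (hist_A B A n)" for n unfolding hist_A_eq h by (simp add: B_def A_def)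
  have A: "A n = f n (B n)" for n by (simp add: A_def B_def)
  have "legal_upto \<alpha> \<beta> B A n" for n
  proof (induction n)
    case 0 then show ?case using st by (simp add: legal_upto_def B_def bob_strategy_def)
  next
    case (Suc n)
    have "ivl_len (B n) \<ge> 0" using legal_upto_len[OF Suc ab(1,2)] by simp
    then have l1: "legal_sub \<alpha> (B n) (A n)" by (simp add: A f)
    have "legal_sub \<beta> (A n) (B (Suc n))" using st Suc l1 Bs unfolding bob_strategy_def by metis
    with Suc l1 show ?case by (simp add: legal_upto_Suc)
  qed
  then show ?thesis using A Bs legal_play_from_upto by (auto simp: B_def)
qed


lemma hist_A_cong: "(\<forall>k\<le>n. B k = B' k) \<Longrightarrow> (\<forall>k\<le>n. A k = A' k) \<Longrightarrow> hist_A B A n = hist_A B' A' n"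
  unfolding hist_A_eq using hist_B_cong[of n B B' A A'] by auto

lemma exists_M:
  fixes p q :: real
  assumes p: "0 < p" "p < 1" and q: "0 < q" "q < 1" and c: "q * (2 - p) < 1"
  shows "\<exists>M. M \<ge> 1 \<and> 2 * q * (kap p q + (1 - kap p q) * (p * q) ^ (M - 1)) < 1"
proof -
  define \<kappa> where "\<kappa> = kap p q"
  have pq2: "p * q < p" using p q by simp
  have pq: "p * q < 1" "0 < p * q" using pq2 p q by (linarith, simp)
  have k1: "\<kappa> < 1" unfolding \<kappa>_def kap_def using pq pq2 by simp
  have k2: "2 * q * \<kappa> < 1"
  proof -
    have "2 * q * (1 - p) < 1 - p * q" using c by (simp add: algebra_simps)
    then have "2 * q * (1 - p) / (1 - p * q) < 1" using pq by simp
    then show ?thesis unfolding \<kappa>_def kap_def by simp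
  qed
  define \<epsilon> where "\<epsilon> = (1 - 2 * q * \<kappa>) / (2 * q * (1 - \<kappa>))"
  have e: "\<epsilon> > 0" unfolding \<epsilon>_def using k1 k2 q by simp
  obtain n where n: "(p * q) ^ n < \<epsilon>" using real_arch_pow_inv[OF e pq(1)] by blast
  have pos: "2 * q * (1 - \<kappa>) > 0" using k1 q by simp
  have "2 * q * (1 - \<kappa>) * (p * q) ^ n < 2 * q * (1 - \<kappa>) * \<epsilon>"
    by (rule mult_strict_left_mono[OF n pos]) 
  also have "\<dots> = 1 - 2 * q * \<kappa>" unfolding \<epsilon>_def using pos
    by (metis less_irrefl nonzero_mult_div_cancel_left times_divide_eq_right)
  finally have "2 * q * (\<kappa> + (1 - \<kappa>) * (p * q) ^ n) < 1" by (simp add: algebra_simps)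
  then show ?thesis by (intro exI[of _ "Suc n"]) (simp add: \<kappa>_def)
qed

theorem theorem3:
  fixes \<alpha> \<beta> :: real and S :: "real set"
  assumes "0 < \<alpha>" "\<alpha> < 1" "0 < \<beta>" "\<beta> < 1"
    and "\<beta> > 2 - 1 / \<alpha>" and "\<alpha> > 2 - 1 / \<beta>"
    and "bernstein_set S"
  shows "\<not> schmidt_determined \<alpha> \<beta> S"
proof
  note ab = assms(1-4)
  have c1: "\<beta> * (2 - \<alpha>) < 1"
  proof -
    have "\<alpha> * \<beta> > (2 - 1 / \<beta>) * \<beta>" using assms(6) ab by simp
    then show ?thesis using ab by (simp add: algebra_simps)
  qed
  have c2: "\<alpha> * (2 - \<beta>) < 1"
  proof -
    have "\<beta> * \<alpha> > (2 - 1 / \<alpha>) * \<alpha>" using assms(5) ab by simp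
    then show ?thesis using ab by (simp add: algebra_simps)
  qed
  assume "schmidt_determined \<alpha> \<beta> S"
  then show False unfolding schmidt_determined_def
  proof (elim disjE exE)
    fix \<sigma> assume w: "alice_winning \<alpha> \<beta> S \<sigma>"
    then have st: "alice_strategy \<alpha> \<beta> \<sigma>" by (simp add: alice_winning_def)
    obtain M where M: "M \<ge> 1" "2 * \<beta> * (kap \<alpha> \<beta> + (1 - kap \<alpha> \<beta>) * (\<alpha> * \<beta>) ^ (M - 1)) < 1"
      using exists_M[of \<alpha> \<beta>] ab c1 by auto
    define g where "g = (\<lambda>b n K. mv \<beta> (b (n div M)) K)"
    have gl: "\<And>n K. ivl_len K \<ge> 0 \<Longrightarrow> legal_sub \<beta> K (g b n K)" for b
      unfolding g_def using ab by (intro mv_legal) auto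
    define IB where "IB = (\<lambda>b n. last (hA \<sigma> (g b) (0,1) n))"
    define JA where "JA = (\<lambda>b n. \<sigma> (hA \<sigma> (g b) (0,1) n))"
    have P: "legal_play \<alpha> \<beta> (IB b) (JA b) \<and> IB b 0 = (0,1) \<and> (\<forall>n. JA b n = \<sigma> (hist_B (IB b) (JA b) n))
       \<and> (\<forall>n. IB b (Suc n) = g b n (JA b n))" for b
      unfolding IB_def JA_def by (rule play_alice[OF st ab(1,3) _ gl]) (use ab in \<open>auto simp: ivl_len_def\<close>)
    interpret s: scheme \<alpha> \<beta> M IB JA "(0,1)"
    proof
      show "0 < \<alpha>" "\<alpha> < 1" "0 < \<beta>" "\<beta> < 1" by (rule ab)+
      show "1 \<le> M" by (rule M)
      show "2 * \<beta> * (kap \<alpha> \<beta> + (1 - kap \<alpha> \<beta>) * (\<alpha> * \<beta>) ^ (M - 1)) < 1" by (rule M)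
      show "IB b 0 = (0,1)" for b using P by blast
      show "0 < ivl_len (0::real, 1::real)" by (simp add: ivl_len_def)
      show "legal_sub \<alpha> (IB b n) (JA b n)" for b n using P unfolding legal_play_def by blast
      show "IB b (Suc n) = mv \<beta> (b (n div M)) (JA b n)" for b n using P unfolding g_def by blast
      show "JA b n = JA b' n" if "\<forall>k\<le>n. IB b k = IB b' k" "\<forall>k<n. JA b k = JA b' k" for b b' n
        using P[of b] P[of b'] hist_B_cong[OF that] by metis
    qed
    obtain C where C: "closed C" "uncountable C" "\<forall>x\<in>C. \<exists>b. \<forall>n. x \<in> ivl_set (IB b n)"
      using s.scheme_main by blast
    then obtain x where x: "x \<in> C" "x \<notin> S" using assms(7) unfolding bernstein_set_def by blast
    then obtain b where b: "\<forall>n. x \<in> ivl_set (IB b n)" using C by blast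
    have "alice_wins_play S (IB b)" using w P[of b] unfolding alice_winning_def by blast
    then obtain y where y: "\<forall>n. y \<in> ivl_set (IB b n)" "y \<in> S" unfolding alice_wins_play_def by blast
    have ne: "\<bar>x - y\<bar> > 0" using x y by auto
    have "\<alpha> * \<beta> < \<alpha>" using ab by simp
    then have pq: "\<alpha> * \<beta> < 1" using ab by linarith
    obtain n where n: "(\<alpha> * \<beta>) ^ n < \<bar>x - y\<bar>" using real_arch_pow_inv[OF ne pq] by blast
    have "\<bar>x - y\<bar> \<le> ivl_len (IB b n)"
      using b[rule_format, of n] y(1)[rule_format, of n] unfolding ivl_set_def ivl_len_def by auto
    also have "\<dots> = (\<alpha> * \<beta>) ^ n" using s.len_I[of b n] by (simp add: ivl_len_def)
    finally show False using n by simp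
  next
    fix \<tau> assume w: "bob_winning \<alpha> \<beta> S \<tau>"
    then have st: "bob_strategy \<alpha> \<beta> \<tau>" by (simp add: bob_winning_def)
    obtain M where M: "M \<ge> 1" "2 * \<alpha> * (kap \<beta> \<alpha> + (1 - kap \<beta> \<alpha>) * (\<beta> * \<alpha>) ^ (M - 1)) < 1"
      using exists_M[of \<beta> \<alpha>] ab c2 by auto
    define f where "f = (\<lambda>b n K. mv \<alpha> (n \<noteq> 0 \<and> b ((n - 1) div M)) K)"
    have fl: "\<And>n K. ivl_len K \<ge> 0 \<Longrightarrow> legal_sub \<alpha> K (f b n K)" for b
      unfolding f_def using ab by (intro mv_legal) auto
    define BB where "BB = (\<lambda>b n. last (hB \<tau> (f b) n))"
    define AA where "AA = (\<lambda>b n. f b n (last (hB \<tau> (f b) n)))"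
    have P: "legal_play \<alpha> \<beta> (BB b) (AA b) \<and> BB b 0 = \<tau> [] \<and> (\<forall>n. BB b (Suc n) = \<tau> (hist_A (BB b) (AA b) n))
       \<and> (\<forall>n. AA b n = f b n (BB b n))" for b
      unfolding BB_def AA_def by (rule play_bob[OF st ab(1,3) _ fl]) (use ab in auto)
    define JB where "JB = (\<lambda>b n. BB b (Suc n))"
    have t0: "ivl_len (\<tau> []) > 0" using st by (simp add: bob_strategy_def)
    interpret s: scheme \<beta> \<alpha> M AA JB "mv \<alpha> False (\<tau> [])"
    proof
      show "0 < \<alpha>" "\<alpha> < 1" "0 < \<beta>" "\<beta> < 1" by (rule ab)+
      show "1 \<le> M" by (rule M)
      show "2 * \<alpha> * (kap \<beta> \<alpha> + (1 - kap \<beta> \<alpha>) * (\<beta> * \<alpha>) ^ (M - 1)) < 1" by (rule M)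
      show "AA b 0 = mv \<alpha> False (\<tau> [])" for b using P[of b] by (simp add: f_def)
      show "0 < ivl_len (mv \<alpha> False (\<tau> []))" using t0 ab by simp
      show "legal_sub \<beta> (AA b n) (JB b n)" for b n using P unfolding legal_play_def JB_def by blast
      show "AA b (Suc n) = mv \<alpha> (b (n div M)) (JB b n)" for b n using P[of b] by (simp add: f_def JB_def)
      show "JB b n = JB b' n" if h1: "\<forall>k\<le>n. AA b k = AA b' k" and h2: "\<forall>k<n. JB b k = JB b' k" for b b' n
      proof -
        have "\<forall>k\<le>n. BB b k = BB b' k"
        proof (intro allI impI)
          fix k assume "k \<le> n"
          then show "BB b k = BB b' k" using P[of b] P[of b'] h2 unfolding JB_def
            by (cases k) auto
        qed
        then have "hist_A (BB b) (AA b) n = hist_A (BB b') (AA b') n" using hist_A_cong h1 by blast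
        then show ?thesis using P[of b] P[of b'] unfolding JB_def by simp
      qed
    qed
    obtain C where C: "closed C" "uncountable C" "\<forall>x\<in>C. \<exists>b. \<forall>n. x \<in> ivl_set (AA b n)"
      using s.scheme_main by blast
    then obtain x where x: "x \<in> C" "x \<in> S" using assms(7) unfolding bernstein_set_def by blast
    then obtain b where b: "\<forall>n. x \<in> ivl_set (AA b n)" using C by blast
    have "x \<in> ivl_set (BB b n)" for n
    proof -
      have "legal_sub \<alpha> (BB b n) (AA b n)" using P unfolding legal_play_def by blast
      then show ?thesis using b[rule_format, of n] unfolding legal_sub_def ivl_set_def by auto
    qed
    then have "alice_wins_play S (BB b)" using x unfolding alice_wins_play_def by blast
    moreover have "\<not> alice_wins_play S (BB b)" using w P[of b] unfolding bob_winning_def by blast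
    ultimately show False by simp
  qed
qed

end
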